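(* Let $a>0$, $u>0$ and $v\in\mathbb{R}$. The inequality $a\cosh x\le\cosh(ux+v)$ holds for all real $x$ if and only if $a\in(0,1]$, $u\ge1$ and $|v|\le v_0(a,u)$, where: if $u>1$, $$v_0=u\log\left(\frac{A}{a}+\frac{uB}{a}\right)-\log(A+B),\qquad A=\sqrt{\frac{u^2-a^2}{u^2-1}},\ B=\sqrt{\frac{1-a^2}{u^2-1}},$$ and if $u=1$, $v_0=-\log a$. *)

theory Defs
  imports Complex_Main
begin

definition v0 :: "real \<Rightarrow> real \<Rightarrow> real" where
  "v0 a u = (if u = 1 then - ln a
     else (let A = sqrt ((u^2 - a^2) / (u^2 - 1));
               B = sqrt ((1 - a^2) / (u^2 - 1))
           in u * ln (A / a + u * B / a) - ln (A + B)))"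

end

theory Submission
  imports Defs
begin

lemma exp_convex_aux:
  fixes l p q :: real
  assumes "0 \<le> l" "l \<le> 1"
  shows "exp (l*p + (1-l)*q) \<le> l * exp p + (1-l) * exp q"
proof -
  define m where "m = l*p + (1-l)*q"
  have ep: "exp p = exp m * exp (p - m)" by (simp flip: exp_add)
  have eq: "exp q = exp m * exp (q - m)" by (simp flip: exp_add)
  have "exp m * (1 + (p - m)) \<le> exp p" unfolding ep
    by (intro mult_left_mono) auto
  moreover have "exp m * (1 + (q - m)) \<le> exp q" unfolding eq
    by (intro mult_left_mono) auto
  ultimately have "l * (exp m * (1 + (p - m))) + (1-l) * (exp m * (1 + (q - m)))
      \<le> l * exp p + (1-l) * exp q"
    using assms by (intro add_mono mult_left_mono) auto
  moreover have "l * (exp m * (1 + (p - m))) + (1-l) * (exp m * (1 + (q - m))) = exp m"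
    unfolding m_def by (simp add: algebra_simps)
  ultimately show ?thesis unfolding m_def by simp
qed

lemma L2:
  fixes u r :: real
  assumes "u \<ge> 1" "r \<ge> 0"
  shows "sinh (u*r) - u * sinh r \<le> cosh (u*r) - cosh r"
proof -
  define l where "l = 2/(u+1)"
  have u1: "u + 1 \<noteq> 0" using assms by auto
  have l0: "0 \<le> l" "l \<le> 1" using assms unfolding l_def by (auto simp: field_simps)
  have e: "l*(-(u*r)) + (1-l)*r = -r" using u1 unfolding l_def
    by (simp add: divide_simps) (simp add: algebra_simps)
  have le: "(u+1) * l = 2" "(u+1) * (1-l) = u - 1" using u1 unfolding l_def
    by (simp_all add: divide_simps)
  have "exp (-r) \<le> l * exp (-(u*r)) + (1-l) * exp r"
    using exp_convex_aux[OF l0, of "-(u*r)" r] e by simp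
  hence "(u+1) * exp (-r) \<le> (u+1) * (l * exp (-(u*r)) + (1-l) * exp r)"
    using assms by (intro mult_left_mono) auto
  also have "\<dots> = ((u+1) * l) * exp (-(u*r)) + ((u+1)*(1-l)) * exp r"
    by (simp add: algebra_simps)
  also have "\<dots> = 2 * exp (-(u*r)) + (u-1) * exp r" unfolding le ..
  finally have *: "(u+1) * exp (-r) \<le> 2 * exp (-(u*r)) + (u-1) * exp r" .
  have "(cosh (u*r) - cosh r) - (sinh (u*r) - u * sinh r) = (2*exp(-(u*r)) + (u-1)*exp r - (u+1)*exp(-r))/2"
    unfolding sinh_field_def cosh_field_def by (simp add: algebra_simps add_divide_distrib diff_divide_distrib)
  moreover have "0 \<le> (2*exp(-(u*r)) + (u-1)*exp r - (u+1)*exp(-r))/2" using * by simp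
  ultimately show ?thesis by linarith
qed

lemma L3:
  fixes u s :: real
  assumes "u \<ge> 1" "s \<ge> 0"
  shows "u * sinh s \<le> sinh (u*s)"
proof -
  have "(\<lambda>s. sinh (u*s) - u * sinh s) 0 \<le> (\<lambda>s. sinh (u*s) - u * sinh s) s"
  proof (rule DERIV_nonneg_imp_nondecreasing[OF assms(2)])
    fix x :: real assume x: "0 \<le> x" "x \<le> s"
    have "cosh x \<le> cosh (u*x)"
      using x assms by (subst cosh_real_nonneg_le_iff) (auto intro: mult_right_mono[of 1 u x, simplified])
    hence "u * cosh (u*x) - u * cosh x \<ge> 0" using assms
      by (simp add: right_diff_distrib[symmetric])
    moreover have "DERIV (\<lambda>s. sinh (u*s) - u * sinh s) x :> (cosh (u*x) * u - u * cosh x)"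
      by (auto intro!: derivative_eq_intros)
    ultimately show "\<exists>y. DERIV (\<lambda>s. sinh (u*s) - u * sinh s) x :> y \<and> y \<ge> 0"
      by (auto simp: algebra_simps)
  qed
  thus ?thesis by simp
qed

lemma L4:
  fixes u s :: real
  assumes "u \<ge> 1"
  shows "cosh s \<le> cosh (u*s)"
proof -
  have e: "\<bar>u*s\<bar> = u*\<bar>s\<bar>" using assms by (simp add: abs_mult)
  have "1 * \<bar>s\<bar> \<le> u*\<bar>s\<bar>" using assms by (intro mult_right_mono) auto
  hence "\<bar>s\<bar> \<le> \<bar>u*s\<bar>" using e by simp
  hence "cosh \<bar>s\<bar> \<le> cosh \<bar>u*s\<bar>" by (subst cosh_real_nonneg_le_iff) auto
  thus ?thesis by simp
qed

lemma cosh_flip: "cosh (u * (-x) + v) = cosh (u*x + - v :: real)"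
proof -
  have "cosh (u * (-x) + v) = cosh (-(u*x + - v))" by (rule arg_cong[where f=cosh]) simp
  thus ?thesis by (simp only: cosh_minus)
qed

lemma good_sym:
  fixes a u v :: real
  shows "(\<forall>x. a * cosh x \<le> cosh (u * x + v)) \<longleftrightarrow> (\<forall>x. a * cosh x \<le> cosh (u * x + - v))"
proof
  assume H: "\<forall>x. a * cosh x \<le> cosh (u * x + v)"
  show "\<forall>x. a * cosh x \<le> cosh (u * x + - v)"
  proof
    fix x have "a * cosh (-x) \<le> cosh (u * (-x) + v)" using H by blast
    thus "a * cosh x \<le> cosh (u * x + - v)" by (simp only: cosh_flip cosh_minus)
  qed
next
  assume H: "\<forall>x. a * cosh x \<le> cosh (u * x + - v)"
  show "\<forall>x. a * cosh x \<le> cosh (u * x + v)"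
  proof
    fix x have "a * cosh (-x) \<le> cosh (u * (-x) + - v)" using H by blast
    thus "a * cosh x \<le> cosh (u * x + v)" by (simp only: cosh_flip cosh_minus minus_minus)
  qed
qed

lemma consts_aux:
  fixes a u :: real
  assumes a0: "0 < a" and a1: "a \<le> 1" and u1: "u > 1"
  shows "\<exists>A B x1 y0. 0 \<le> B \<and> B \<le> A \<and> x1 \<ge> 0 \<and> v0 a u = u*x1 - y0 \<and>
           a * cosh x1 = A \<and> a * sinh x1 = u*B \<and> cosh y0 = A \<and> sinh y0 = B"
proof -
  define A where "A = sqrt ((u^2 - a^2) / (u^2 - 1))"
  define B where "B = sqrt ((1 - a^2) / (u^2 - 1))"
  have upos: "u^2 - 1 > 0" using u1 by (simp add: one_less_power)
  have a2: "a^2 \<le> 1" using a0 a1 by (simp add: power_le_one)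
  have ua: "u^2 - a^2 \<ge> 0" using a2 upos by linarith
  have A2: "A^2 = (u^2 - a^2) / (u^2 - 1)" unfolding A_def using ua upos by simp
  have B2: "B^2 = (1 - a^2) / (u^2 - 1)" unfolding B_def using a2 upos by simp
  have A0: "A \<ge> 0" and B0: "B \<ge> 0" unfolding A_def B_def using ua a2 upos by auto
  have AB1: "A^2 - B^2 = 1" unfolding A2 B2 using upos
    by (simp add: diff_divide_distrib[symmetric])
  have "A^2 - u^2*B^2 = (u^2 - a^2)/(u^2 - 1) - (u^2*(1 - a^2))/(u^2 - 1)"
    unfolding A2 B2 by simp
  also have "\<dots> = ((u^2 - a^2) - u^2*(1 - a^2))/(u^2 - 1)" by (rule diff_divide_distrib[symmetric])
  also have "(u^2 - a^2) - u^2*(1 - a^2) = a^2 * (u^2 - 1)" by (simp add: algebra_simps)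
  also have "a^2 * (u^2 - 1) / (u^2 - 1) = a^2" using upos by simp
  finally have ABu: "A^2 - u^2*B^2 = a^2" .
  have "B^2 \<le> A^2" using AB1 by linarith
  hence BA: "B \<le> A" using A0 by (rule power2_le_imp_le)
  have "0 \<le> u^2*B^2" by simp
  hence "a^2 \<le> A^2" using ABu by linarith
  hence aA: "a \<le> A" using A0 by (rule power2_le_imp_le)
  have "1^2 \<le> A^2" using AB1 zero_le_power2[of B] by (simp only: power_one)
  hence A1: "1 \<le> A" using A0 by (rule power2_le_imp_le)
  have ApB: "A + B > 0" using A1 B0 by linarith
  have uB: "u*B \<ge> 0" using B0 u1 by simp
  have AuB: "A + u*B \<ge> a" using aA uB by linarith
  define y0 where "y0 = ln (A + B)"
  define x1 where "x1 = ln ((A + u*B)/a)"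
  have invy: "inverse (A + B) = A - B"
  proof (rule inverse_unique)
    show "(A + B) * (A - B) = 1" using AB1 by (simp add: power2_eq_square algebra_simps)
  qed
  have invx: "inverse ((A + u*B)/a) = (A - u*B)/a"
  proof (rule inverse_unique)
    have "(A + u*B) * (A - u*B) = a^2" using ABu by (simp add: power2_eq_square algebra_simps)
    hence "(A + u*B) * (A - u*B) = a * a" by (simp add: power2_eq_square)
    thus "(A + u*B)/a * ((A - u*B)/a) = 1" using a0 by simp
  qed
  have xp: "(A + u*B)/a > 0" using AuB a0 by simp
  have cy: "cosh y0 = A" unfolding y0_def using ApB by (simp add: cosh_ln_real invy)
  have sy: "sinh y0 = B" unfolding y0_def using ApB by (simp add: sinh_ln_real invy)
  have "cosh x1 = ((A + u*B)/a + (A - u*B)/a)/2" unfolding x1_def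
    by (simp only: cosh_ln_real[OF xp] invx)
  hence cx: "a * cosh x1 = A" using a0 by (simp add: field_simps)
  have "sinh x1 = ((A + u*B)/a - (A - u*B)/a)/2" unfolding x1_def
    by (simp only: sinh_ln_real[OF xp] invx)
  hence sx: "a * sinh x1 = u*B" using a0 by (simp add: field_simps)
  have "1 \<le> (A + u*B)/a" using AuB a0 by simp
  hence x10: "x1 \<ge> 0" unfolding x1_def by (rule ln_ge_zero)
  have uneq: "u \<noteq> 1" using u1 by simp
  have "v0 a u = u * ln (A/a + u*B/a) - ln (A + B)"
    unfolding v0_def Let_def A_def B_def using uneq by (simp only: if_False)
  also have "A/a + u*B/a = (A + u*B)/a" by (rule add_divide_distrib[symmetric])
  finally have v0e: "v0 a u = u*x1 - y0" unfolding x1_def y0_def .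
  show ?thesis using B0 BA x10 v0e cx sx cy sy by blast
qed

lemma endpoint_gt:
  fixes a u A B x1 y0 x :: real
  assumes B0: "0 \<le> B" and BA: "B \<le> A" and cx: "a*cosh x1 = A" and sx: "a*sinh x1 = u*B"
    and cy: "cosh y0 = A" and sy: "sinh y0 = B" and u1: "u \<ge> 1"
  shows "a*cosh x \<le> cosh (u*x - (u*x1 - y0))"
proof -
  define s where "s = x - x1"
  have e1: "u*x - (u*x1 - y0) = u*s + y0" by (simp add: s_def algebra_simps)
  have e2: "x = s + x1" by (simp add: s_def)
  have A0: "A \<ge> 0" using B0 BA by linarith
  have "a*cosh x = cosh s * (a*cosh x1) + sinh s * (a*sinh x1)"
    unfolding e2 by (simp add: cosh_add algebra_simps)
  also have "\<dots> = A*cosh s + B*(u*sinh s)" unfolding cx sx by (simp add: algebra_simps)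
  finally have L: "a*cosh x = A*cosh s + B*(u*sinh s)" .
  have R: "cosh (u*x - (u*x1 - y0)) = A*cosh (u*s) + B*sinh (u*s)"
    unfolding e1 cosh_add cy sy by (simp add: algebra_simps)
  show ?thesis
  proof (cases "s \<ge> 0")
    case True
    have "A*cosh s \<le> A*cosh (u*s)" using L4[OF u1] A0 by (intro mult_left_mono) auto
    moreover have "B*(u*sinh s) \<le> B*sinh (u*s)" using L3[OF u1 True] B0 by (intro mult_left_mono) auto
    ultimately show ?thesis unfolding L R by linarith
  next
    case False
    define r where "r = -s"
    have r0: "r \<ge> 0" using False by (simp add: r_def)
    have hs: "cosh s = cosh r" "sinh s = - sinh r" "cosh (u*s) = cosh (u*r)" "sinh (u*s) = - sinh (u*r)"
      by (simp_all add: r_def)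
    have D: "0 \<le> sinh (u*r) - u*sinh r" using L3[OF u1 r0] by simp
    have E: "sinh (u*r) - u*sinh r \<le> cosh (u*r) - cosh r" using L2[OF u1 r0] .
    have "B*(sinh (u*r) - u*sinh r) \<le> A*(sinh (u*r) - u*sinh r)" using BA D by (rule mult_right_mono)
    also have "\<dots> \<le> A*(cosh (u*r) - cosh r)" using E A0 by (rule mult_left_mono)
    finally have "B*(sinh (u*r) - u*sinh r) \<le> A*(cosh (u*r) - cosh r)" .
    hence "A*cosh r + B*(u*(- sinh r)) \<le> A*cosh (u*r) + B*(- sinh (u*r))"
      by (simp add: algebra_simps)
    thus ?thesis unfolding L R hs .
  qed
qed

lemma endpoint_one:
  fixes a x :: real
  assumes a0: "0 < a" and a1: "a \<le> 1"
  shows "a*cosh x \<le> cosh (1*x - (- ln a))"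
proof -
  have ia: "inverse a \<ge> 1" using a0 a1 by (simp add: one_le_inverse)
  have "cosh (1*x - (- ln a)) = cosh x * cosh (ln a) + sinh x * sinh (ln a)"
    by (simp add: cosh_add)
  also have "\<dots> = cosh x * ((a + inverse a)/2) + sinh x * ((a - inverse a)/2)"
    using a0 by (simp add: cosh_ln_real sinh_ln_real)
  also have "\<dots> = a*cosh x + ((inverse a - a)/2) * (cosh x - sinh x)"
    by (simp add: algebra_simps add_divide_distrib diff_divide_distrib)
  finally have e: "cosh (1*x - (- ln a)) = a*cosh x + ((inverse a - a)/2) * (cosh x - sinh x)" .
  have "0 \<le> ((inverse a - a)/2) * (cosh x - sinh x)"
    using ia a1 sinh_le_cosh_real[of x] by (intro mult_nonneg_nonneg) auto
  thus ?thesis unfolding e by linarith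
qed

lemma suff_gen:
  fixes a u w v x :: real
  assumes a0: "0 < a" and u0: "u > 0" and E: "\<forall>x. a*cosh x \<le> cosh (u*x - w)"
    and vw: "\<bar>v\<bar> \<le> w"
  shows "a*cosh x \<le> cosh (u*x + v)"
proof -
  have P: "a*cosh x \<le> cosh (u*x + v)" if x0: "x \<ge> 0" and vw: "\<bar>v\<bar> \<le> w" for x v
  proof (cases "u*x \<ge> w")
    case True
    have "cosh (u*x - w) \<le> cosh (u*x + v)"
      using True vw by (subst cosh_real_nonneg_le_iff) auto
    thus ?thesis using E by (meson order_trans)
  next
    case False
    have w0: "w \<ge> 0" using vw by linarith
    have xw: "x \<le> w/u" using False u0 by (simp add: le_divide_eq mult.commute)
    have "cosh x \<le> cosh (w/u)" using x0 xw w0 u0 by (subst cosh_real_nonneg_le_iff) auto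
    hence "a*cosh x \<le> a*cosh (w/u)" using a0 by simp
    also have "\<dots> \<le> cosh (u*(w/u) - w)" using E by blast
    also have "u*(w/u) - w = 0" using u0 by simp
    finally have "a*cosh x \<le> 1" by simp
    thus ?thesis using cosh_real_ge_1[of "u*x+v"] by linarith
  qed
  show ?thesis
  proof (cases "x \<ge> 0")
    case True thus ?thesis using P vw by blast
  next
    case False
    have "a*cosh (-x) \<le> cosh (u*(-x) + (-v))" using False vw by (intro P) auto
    thus ?thesis by (simp only: cosh_flip cosh_minus minus_minus)
  qed
qed

lemma cosh_le_exp_abs: "cosh (y::real) \<le> exp \<bar>y\<bar>"
proof -
  have "exp y \<le> exp \<bar>y\<bar>" "exp (-y) \<le> exp \<bar>y\<bar>" by auto
  hence "exp y + exp (-y) \<le> 2 * exp \<bar>y\<bar>" by linarith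
  thus ?thesis unfolding cosh_field_def by simp
qed

lemma nec_u:
  fixes a u v :: real
  assumes a0: "0 < a" and u0: "u > 0" and u1: "u < 1"
  shows "\<exists>x. cosh (u*x + v) < a*cosh x"
proof -
  define x where "x = (\<bar>v\<bar> + \<bar>ln a\<bar> + 1)/(1-u)"
  have x0: "x \<ge> 0" unfolding x_def using u1 by simp
  have xe: "x - u*x = \<bar>v\<bar> + \<bar>ln a\<bar> + 1" unfolding x_def using u1
    by (simp add: divide_simps) (simp add: algebra_simps)
  have "\<bar>u*x + v\<bar> \<le> u*x + \<bar>v\<bar>" using abs_triangle_ineq[of "u*x" v] x0 u0 by simp
  moreover have "u*x + \<bar>v\<bar> < x + ln a - ln 2"
    using xe ln_2_less_1 by (simp add: abs_if split: if_splits)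
  ultimately have lt: "\<bar>u*x + v\<bar> < x + ln a - ln 2" by linarith
  have "cosh (u*x + v) \<le> exp \<bar>u*x + v\<bar>" by (rule cosh_le_exp_abs)
  also have "\<dots> < exp (x + ln a - ln 2)" using lt by simp
  also have "exp (x + ln a - ln 2) = a * exp x / 2" using a0 by (simp add: exp_add exp_diff)
  also have "\<dots> < a * cosh x"
  proof -
    have "exp x / 2 < cosh x" unfolding cosh_field_def by (simp add: divide_strict_right_mono)
    thus ?thesis using a0 by simp
  qed
  finally show ?thesis by blast
qed

lemma nec_a:
  fixes a u v :: real
  assumes a0: "0 < a" and u0: "u > 0" and G: "\<forall>x. a * cosh x \<le> cosh (u * x + v)"
  shows "a \<le> 1"
proof -
  have "a * cosh (-v/u) \<le> cosh (u*(-v/u) + v)" using G by blast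
  also have "u*(-v/u) + v = 0" using u0 by simp
  finally have "a * cosh (-v/u) \<le> 1" by simp
  moreover have "a \<le> a * cosh (-v/u)" using a0 cosh_real_ge_1[of "-v/u"] by simp
  ultimately show ?thesis by linarith
qed

lemma nec_one:
  fixes a v :: real
  assumes a0: "0 < a" and a1: "a \<le> 1" and G: "\<forall>x. a * cosh x \<le> cosh (1 * x + v)"
  shows "v \<le> - ln a"
proof (rule ccontr)
  assume "\<not> v \<le> - ln a"
  hence vl: "- v < ln a" by linarith
  have "exp (-v) < exp (ln a)" using vl by (simp only: exp_less_cancel_iff)
  hence ev: "exp (-v) < a" using a0 by simp
  have "ln a \<le> 0" using a0 a1 by simp
  hence v0: "v > 0" using vl by linarith
  define d where "d = a - exp (-v)"
  have d0: "d > 0" using ev by (simp add: d_def)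
  have dE: "exp (-v) = a - d" by (simp add: d_def)
  have "exp (-v) > 0" by simp
  hence d1: "d < 1" using a1 unfolding d_def by linarith
  define P where "P = d / (2 * exp v)"
  have P0: "P > 0" using d0 by (simp add: P_def)
  have ev1: "exp v > 1" using v0 by simp
  have PE: "P * exp v = d/2" unfolding P_def by simp
  have "d < 2*exp v" using d1 ev1 by linarith
  hence P1: "P < 1" unfolding P_def by (simp add: divide_simps)
  define x where "x = ln P"
  have ex: "exp x = P" using P0 by (simp add: x_def)
  have h1: "P*P*exp v = P*(d/2)" using PE by (simp add: mult.assoc)
  have "P*(d/2) < 1*(d/2)" using P1 d0 by (intro mult_strict_right_mono) auto
  hence h2: "P*(d/2) < d/2" by (simp only: mult_1)
  have "P*P*exp v < d/2" unfolding h1 using h2 .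
  hence PP: "P * P * exp v < d" using d0 by linarith
  have "0 \<le> a*P*P" using a0 P0 by simp
  hence key: "P*P*exp v + exp (-v) < a*P*P + a" using dE PP by linarith
  have e1: "exp (1*x+v) = P*exp v" by (simp add: exp_add ex)
  have "exp (-v)/P = exp (-v - x)" unfolding ex[symmetric] exp_diff ..
  also have "-v - x = -(1*x+v)" by simp
  finally have e2: "exp (-(1*x+v)) = exp (-v)/P" by simp
  have e3: "exp (-x) = 1/P" by (simp add: exp_minus ex inverse_eq_divide)
  have "P * (2 * cosh (1*x + v)) = P * (P*exp v) + P * (exp (-v)/P)"
    unfolding cosh_field_def e1 e2 by (simp add: algebra_simps)
  also have "\<dots> = P*P*exp v + exp (-v)" using P0 by simp
  finally have c1: "P * (2 * cosh (1*x + v)) = P*P*exp v + exp (-v)" .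
  have "P * (2 * (a * cosh x)) = a * (P * P) + a * (P * (1/P))"
    unfolding cosh_field_def e3 ex by (simp add: algebra_simps)
  also have "\<dots> = a*P*P + a" using P0 by simp
  finally have c2: "P * (2 * (a * cosh x)) = a*P*P + a" .
  have "P * (2 * cosh (1*x + v)) < P * (2 * (a * cosh x))" unfolding c1 c2 using key .
  hence "cosh (1*x + v) < a * cosh x" using P0 by simp
  thus False using G by (meson not_le)
qed

lemma nec_gt:
  fixes a u v A B x1 y0 :: real
  assumes u0: "u > 0" and a0: "0 < a" and x10: "x1 \<ge> 0" and cx: "a*cosh x1 = A" and cy: "cosh y0 = A"
    and G: "\<forall>x. a * cosh x \<le> cosh (u * x + v)"
  shows "- (u*x1 - y0) \<le> v"
proof (rule ccontr)
  assume "\<not> ?thesis"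
  hence vl: "v < y0 - u*x1" by linarith
  define x where "x = (y0 - v)/u"
  have e: "u*x + v = y0" unfolding x_def using u0 by simp
  have "x1 < x" unfolding x_def using vl u0 by (simp add: less_divide_eq algebra_simps)
  hence "cosh x1 < cosh x" using x10 by (subst cosh_real_nonneg_less_iff) auto
  hence "A < a * cosh x" using a0 cx by (metis mult_strict_left_mono)
  moreover have "a * cosh x \<le> A" using G e cy by metis
  ultimately show False by simp
qed

theorem lemma5:
  fixes a u v :: real
  assumes "a > 0" and "u > 0"
  shows "(\<forall>x::real. a * cosh x \<le> cosh (u * x + v)) \<longleftrightarrow>
           (a \<le> 1 \<and> u \<ge> 1 \<and> \<bar>v\<bar> \<le> v0 a u)"
proof
  assume G: "\<forall>x::real. a * cosh x \<le> cosh (u * x + v)"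
  have Gm: "\<forall>x::real. a * cosh x \<le> cosh (u * x + - v)" using G good_sym by blast
  have u1: "u \<ge> 1"
  proof (rule ccontr)
    assume "\<not> u \<ge> 1"
    then obtain x where "cosh (u*x + v) < a*cosh x" using nec_u assms by (meson not_le)
    thus False using G by (meson not_le)
  qed
  have a1: "a \<le> 1" using nec_a assms G by blast
  show "a \<le> 1 \<and> u \<ge> 1 \<and> \<bar>v\<bar> \<le> v0 a u"
  proof (cases "u = 1")
    case True
    have G1: "\<forall>x. a * cosh x \<le> cosh (1 * x + v)" using G True by simp
    have G2: "\<forall>x. a * cosh x \<le> cosh (1 * x + - v)" using Gm True by simp
    have "v \<le> - ln a" using nec_one[OF assms(1) a1 G1] .
    moreover have "- v \<le> - ln a" using nec_one[OF assms(1) a1 G2] .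
    ultimately show ?thesis using a1 u1 True by (simp add: v0_def)
  next
    case False
    hence ug: "u > 1" using u1 by simp
    obtain A B x1 y0 where c: "0 \<le> B" "B \<le> A" "x1 \<ge> 0" "v0 a u = u*x1 - y0"
       "a * cosh x1 = A" "a * sinh x1 = u*B" "cosh y0 = A" "sinh y0 = B"
      using consts_aux[OF assms(1) a1 ug] by blast
    have "- (u*x1 - y0) \<le> v" using nec_gt[OF assms(2) assms(1) c(3) c(5) c(7) G] .
    moreover have "- (u*x1 - y0) \<le> - v" using nec_gt[OF assms(2) assms(1) c(3) c(5) c(7) Gm] .
    ultimately show ?thesis using a1 u1 c(4) by (simp add: abs_le_iff)
  qed
next
  assume H: "a \<le> 1 \<and> u \<ge> 1 \<and> \<bar>v\<bar> \<le> v0 a u"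
  hence a1: "a \<le> 1" and u1: "u \<ge> 1" and vw: "\<bar>v\<bar> \<le> v0 a u" by auto
  have E: "\<forall>x. a*cosh x \<le> cosh (u*x - v0 a u)"
  proof (cases "u = 1")
    case True
    then show ?thesis using endpoint_one[OF assms(1) a1] by (simp add: v0_def)
  next
    case False
    hence ug: "u > 1" using u1 by simp
    obtain A B x1 y0 where c: "0 \<le> B" "B \<le> A" "x1 \<ge> 0" "v0 a u = u*x1 - y0"
       "a * cosh x1 = A" "a * sinh x1 = u*B" "cosh y0 = A" "sinh y0 = B"
      using consts_aux[OF assms(1) a1 ug] by blast
    show ?thesis unfolding c(4) using endpoint_gt[OF c(1,2,5,6,7,8) u1] by blast
  qed
  show "\<forall>x. a * cosh x \<le> cosh (u * x + v)"
    using suff_gen[OF assms(1) assms(2) E vw] by blast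
qed

end
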